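(* Let $n\ge 2$. The maximum values of the normalized Graovac-Ghorbani index and of the Graovac-Ghorbani index over the set of all connected bipartite graphs $G$ on $n$ vertices are $$\mathrm{NGG}(G) = \sqrt{\lfloor n/2\rfloor \lceil n/2\rceil} \quad\text{and}\quad \mathrm{GG}(G) = \sqrt{(n-2)\lfloor n/2\rfloor \lceil n/2\rceil},$$ respectively, and each of these values is achieved if and only if $G$ is the complete bipartite graph $K_{\lfloor n/2\rfloor, \lceil n/2\rceil}$.
   Context: All graphs are finite, simple, undirected and connected. For an edge $uv$ of a graph $G$, let $n_u = |\{w \in V(G) : d(w,u) < d(w,v)\}|$ and $n_v = |\{w \in V(G) : d(w,v) < d(w,u)\}|$, where $d$ is the shortest-path distance. The Graovac-Ghorbani index is $\mathrm{GG}(G) = \sum_{uv \in E(G)} \sqrt{\frac{n_u + n_v - 2}{n_u n_v}}$ and the normalized Graovac-Ghorbani index is $\mathrm{NGG}(G) = \sum_{uv \in E(G)} \frac{1}{\sqrt{n_u n_v}}$. *)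

theory Defs
  imports Complex_Main
begin

definition simple_graph :: "'a set \<Rightarrow> ('a \<Rightarrow> 'a \<Rightarrow> bool) \<Rightarrow> bool" where
  "simple_graph V E \<longleftrightarrow> finite V \<and> (\<forall>x y. E x y \<longrightarrow> x \<in> V \<and> y \<in> V)
     \<and> (\<forall>x y. E x y \<longrightarrow> E y x) \<and> (\<forall>x. \<not> E x x)"

definition is_walk :: "'a set \<Rightarrow> ('a \<Rightarrow> 'a \<Rightarrow> bool) \<Rightarrow> 'a list \<Rightarrow> bool" where
  "is_walk V E xs \<longleftrightarrow> xs \<noteq> [] \<and> set xs \<subseteq> V \<and> (\<forall>i. Suc i < length xs \<longrightarrow> E (xs ! i) (xs ! Suc i))"

definition connected_graph :: "'a set \<Rightarrow> ('a \<Rightarrow> 'a \<Rightarrow> bool) \<Rightarrow> bool" where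
  "connected_graph V E \<longleftrightarrow> V \<noteq> {} \<and>
     (\<forall>u\<in>V. \<forall>v\<in>V. \<exists>xs. is_walk V E xs \<and> hd xs = u \<and> last xs = v)"

definition gdist :: "'a set \<Rightarrow> ('a \<Rightarrow> 'a \<Rightarrow> bool) \<Rightarrow> 'a \<Rightarrow> 'a \<Rightarrow> nat" where
  "gdist V E u v = (LEAST k. \<exists>xs. is_walk V E xs \<and> hd xs = u \<and> last xs = v \<and> length xs = Suc k)"

definition bipartite :: "'a set \<Rightarrow> ('a \<Rightarrow> 'a \<Rightarrow> bool) \<Rightarrow> bool" where
  "bipartite V E \<longleftrightarrow> (\<exists>A. \<forall>x y. E x y \<longrightarrow> (x \<in> A \<longleftrightarrow> y \<notin> A))"

definition is_complete_bipartite :: "'a set \<Rightarrow> ('a \<Rightarrow> 'a \<Rightarrow> bool) \<Rightarrow> nat \<Rightarrow> nat \<Rightarrow> bool" where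
  "is_complete_bipartite V E p q \<longleftrightarrow> (\<exists>A B. A \<inter> B = {} \<and> A \<union> B = V \<and> card A = p \<and> card B = q \<and>
     (\<forall>x y. E x y \<longleftrightarrow> (x \<in> A \<and> y \<in> B) \<or> (x \<in> B \<and> y \<in> A)))"

definition n_closer :: "'a set \<Rightarrow> ('a \<Rightarrow> 'a \<Rightarrow> bool) \<Rightarrow> 'a \<Rightarrow> 'a \<Rightarrow> nat" where
  "n_closer V E u v = card {w \<in> V. gdist V E w u < gdist V E w v}"

text \<open>Sums over edges are written as sums over ordered adjacent pairs divided by 2;
  the summands are symmetric in u and v.\<close>
definition GG :: "'a set \<Rightarrow> ('a \<Rightarrow> 'a \<Rightarrow> bool) \<Rightarrow> real" where
  "GG V E = (\<Sum>(u,v)\<in>{(u,v). u \<in> V \<and> v \<in> V \<and> E u v}.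
      sqrt ((real (n_closer V E u v) + real (n_closer V E v u) - 2)
            / (real (n_closer V E u v) * real (n_closer V E v u)))) / 2"

definition NGG :: "'a set \<Rightarrow> ('a \<Rightarrow> 'a \<Rightarrow> bool) \<Rightarrow> real" where
  "NGG V E = (\<Sum>(u,v)\<in>{(u,v). u \<in> V \<and> v \<in> V \<and> E u v}.
      1 / sqrt (real (n_closer V E u v) * real (n_closer V E v u))) / 2"

end

theory Submission
  imports Defs "HOL-Analysis.Convex"
begin

lemma walk1: "x \<in> V \<Longrightarrow> is_walk V E [x]" by (simp add: is_walk_def)
lemma walk2: "x \<in> V \<Longrightarrow> y \<in> V \<Longrightarrow> E x y \<Longrightarrow> is_walk V E [x,y]"
  by (auto simp: is_walk_def less_Suc_eq)
lemma walk3: "x \<in> V \<Longrightarrow> y \<in> V \<Longrightarrow> z \<in> V \<Longrightarrow> E x y \<Longrightarrow> E y z \<Longrightarrow> is_walk V E [x,y,z]"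
  by (auto simp: is_walk_def less_Suc_eq)

locale bg =
  fixes V :: "'a set" and E :: "'a \<Rightarrow> 'a \<Rightarrow> bool" and A :: "'a set"
  assumes sg: "simple_graph V E" and conn: "connected_graph V E"
    and bipA: "\<And>x y. E x y \<Longrightarrow> (x \<in> A \<longleftrightarrow> y \<notin> A)"
begin

lemma finV: "finite V" using sg by (simp add: simple_graph_def)
lemma EV: "E x y \<Longrightarrow> x \<in> V \<and> y \<in> V" using sg by (simp add: simple_graph_def)
lemma Esym: "E x y \<Longrightarrow> E y x" using sg by (simp add: simple_graph_def)
lemma Eirr: "\<not> E x x" using sg by (simp add: simple_graph_def)

lemma walk_parity:
  assumes "is_walk V E xs" "i < length xs"
  shows "(xs!i \<in> A \<longleftrightarrow> xs!0 \<in> A) \<longleftrightarrow> even i"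
  using assms(2)
proof (induction i)
  case 0 then show ?case by simp
next
  case (Suc i)
  then have "E (xs!i) (xs!Suc i)" using assms(1) by (simp add: is_walk_def)
  then have "xs!i \<in> A \<longleftrightarrow> xs!Suc i \<notin> A" by (rule bipA)
  with Suc show ?case by auto
qed

lemma walk_hd_last_parity:
  assumes "is_walk V E xs"
  shows "(hd xs \<in> A \<longleftrightarrow> last xs \<in> A) \<longleftrightarrow> even (length xs - 1)"
proof -
  have ne: "xs \<noteq> []" using assms by (simp add: is_walk_def)
  have "hd xs = xs!0" using ne by (simp add: hd_conv_nth)
  moreover have "last xs = xs!(length xs - 1)" using ne by (simp add: last_conv_nth)
  ultimately show ?thesis using walk_parity[OF assms, of "length xs - 1"] ne by auto
qed

lemma dist_walk:
  assumes "u \<in> V" "v \<in> V"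
  shows "\<exists>xs. is_walk V E xs \<and> hd xs = u \<and> last xs = v \<and> length xs = Suc (gdist V E u v)"
proof -
  obtain xs where xs: "is_walk V E xs" "hd xs = u" "last xs = v"
    using conn assms unfolding connected_graph_def by blast
  then have "length xs = Suc (length xs - 1)" by (cases xs) (auto simp: is_walk_def)
  with xs have "\<exists>k xs. is_walk V E xs \<and> hd xs = u \<and> last xs = v \<and> length xs = Suc k" by blast
  then show ?thesis unfolding gdist_def by (rule LeastI_ex)
qed

lemma dist_le:
  assumes "is_walk V E xs" "hd xs = u" "last xs = v"
  shows "gdist V E u v \<le> length xs - 1"
proof -
  have l: "length xs = Suc (length xs - 1)" using assms(1) by (cases xs) (auto simp: is_walk_def)
  show ?thesis unfolding gdist_def by (rule Least_le) (use assms l in blast)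
qed

lemma dist_parity:
  assumes "u \<in> V" "v \<in> V"
  shows "(u \<in> A \<longleftrightarrow> v \<in> A) \<longleftrightarrow> even (gdist V E u v)"
  using dist_walk[OF assms] walk_hd_last_parity by fastforce

lemma dist0:
  assumes "u \<in> V" "v \<in> V" "gdist V E u v = 0" shows "u = v"
proof -
  obtain xs where "is_walk V E xs" "hd xs = u" "last xs = v" "length xs = 1"
    using dist_walk[OF assms(1,2)] assms(3) by auto
  then show ?thesis by (cases xs) auto
qed

lemma dist_self: "u \<in> V \<Longrightarrow> gdist V E u u = 0"
  using dist_le[of "[u]" u u] walk1[of u V E] by simp

lemma dist_adj: "E w u \<Longrightarrow> gdist V E w u \<le> 1"
  using dist_le[of "[w,u]" w u] walk2[of w V u E] EV[of w u] by simp

lemma closer_sum: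
  assumes "E u v"
  shows "n_closer V E u v + n_closer V E v u = card V"
proof -
  have uv: "u \<in> V" "v \<in> V" using EV[OF assms] by auto
  have ne: "gdist V E w u \<noteq> gdist V E w v" if "w \<in> V" for w
    using dist_parity[OF that uv(1)] dist_parity[OF that uv(2)] bipA[OF assms] by auto
  define X where "X = {w \<in> V. gdist V E w u < gdist V E w v}"
  define Y where "Y = {w \<in> V. gdist V E w v < gdist V E w u}"
  have "V = X \<union> Y" unfolding X_def Y_def using ne by (auto simp: linorder_neq_iff)
  moreover have "card (X \<union> Y) = card X + card Y"
    by (rule card_Un_disjoint) (auto simp: X_def Y_def intro: finite_subset[OF _ finV])
  ultimately show ?thesis by (simp add: n_closer_def X_def Y_def)
qed

definition N where "N u = {v. E u v}"

lemma finN: "finite (N u)" using finV EV by (auto simp: N_def intro: finite_subset)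

lemma closer_deg:
  assumes "E u v" shows "card (N u) \<le> n_closer V E u v"
proof -
  have uv: "u \<in> V" "v \<in> V" using EV[OF assms] by auto
  have "u \<notin> N u - {v}" using Eirr by (simp add: N_def)
  hence "card (insert u (N u - {v})) = Suc (card (N u - {v}))" using finN by simp
  also have "\<dots> = card (N u)" using finN[of u] assms card_Suc_Diff1[of "N u" v] by (simp add: N_def)
  finally have c: "card (N u) = card (insert u (N u - {v}))" by simp
  have sub: "insert u (N u - {v}) \<subseteq> {w \<in> V. gdist V E w u < gdist V E w v}"
  proof
    fix w assume w: "w \<in> insert u (N u - {v})"
    show "w \<in> {w \<in> V. gdist V E w u < gdist V E w v}"
    proof (cases "w = u")
      case True
      have "gdist V E u v \<noteq> 0" using dist0[OF uv] assms Eirr by auto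
      then show ?thesis using True uv dist_self by simp
    next
      case False
      then have wN: "E u w" "w \<noteq> v" using w by (auto simp: N_def)
      have wV: "w \<in> V" using EV[OF wN(1)] by simp
      have "gdist V E w u \<le> 1" using dist_adj Esym wN by blast
      moreover have "even (gdist V E w v)"
        using dist_parity[OF wV uv(2)] bipA[OF wN(1)] bipA[OF assms] by auto
      moreover have "gdist V E w v \<noteq> 0" using dist0[OF wV uv(2)] wN by auto
      moreover have "gdist V E w v \<noteq> 1" using \<open>even (gdist V E w v)\<close> by auto
      ultimately have "gdist V E w u < gdist V E w v" by linarith
      then show ?thesis using wV by simp
    qed
  qed
  have "card (insert u (N u - {v})) \<le> n_closer V E u v"
    unfolding n_closer_def by (rule card_mono) (use finV sub in auto)
  then show ?thesis using c by simp
qed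

lemma deg_pos: "E u v \<Longrightarrow> 1 \<le> card (N u)"
  using finN by (metis N_def One_nat_def Suc_leI card_gt_0_iff empty_iff mem_Collect_eq)

end

lemma kq1:
  fixes k p n :: nat
  assumes "k \<le> p" "p \<le> n - p" "p \<le> n"
  shows "k*(n-k) \<le> p*(n-p) \<and> (k*(n-k) = p*(n-p) \<longrightarrow> k = p \<or> k = n-p)"
proof -
  obtain d where d: "p = k + d" using assms(1) le_Suc_ex by blast
  have nk: "n - k = (n-p) + d" using d assms by linarith
  have e1: "k*(n-k) = k*(n-p) + k*d" using nk by (simp add: algebra_simps)
  have e2: "p*(n-p) = k*(n-p) + d*(n-p)" using d by (simp add: add_mult_distrib)
  have kle: "k \<le> n - p" using assms by linarith
  have m: "k*d \<le> d*(n-p)" using kle by (simp add: mult.commute)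
  have "k*d = d*(n-p) \<longrightarrow> d = 0 \<or> k = n - p" by (simp add: mult.commute)
  then show ?thesis using e1 e2 m d by auto
qed

lemma kq:
  fixes k n :: nat
  assumes "k \<le> n"
  shows "k*(n-k) \<le> (n div 2)*(n - n div 2) \<and>
    (k*(n-k) = (n div 2)*(n - n div 2) \<longrightarrow> k = n div 2 \<or> k = n - n div 2)"
proof (cases "k \<le> n div 2")
  case True
  then show ?thesis using kq1[of k "n div 2" n] by linarith
next
  case False
  define k' where "k' = n - k"
  have k': "k' \<le> n div 2" using False assms by (simp add: k'_def)
  have "k*(n-k) = k'*(n-k')" using assms by (simp add: k'_def mult.commute)
  moreover have "k = n - k'" using assms by (simp add: k'_def)
  moreover have h: "n div 2 \<le> n - n div 2" "n div 2 \<le> n" by auto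
  moreover have "k' \<le> n" by (simp add: k'_def)
  ultimately show ?thesis using kq1[OF k' h] by (auto simp: mult.commute)
qed

context bg begin

definition S where "S = {(u,v). u \<in> V \<and> v \<in> V \<and> E u v}"
lemma S_E: "(u,v) \<in> S \<longleftrightarrow> E u v" using EV by (auto simp: S_def)
lemma finS: "finite S" unfolding S_def by (rule finite_subset[of _ "V \<times> V"]) (auto simp: finV)

definition f where "f = (\<lambda>(u,v). 1 / sqrt (real (n_closer V E u v) * real (n_closer V E v u)))"

lemma NGG_S: "NGG V E = sum f S / 2"
  by (simp add: NGG_def S_def f_def)

lemma GG_NGG: "GG V E = sqrt (real (card V) - 2) * NGG V E"
proof -
  define g where "g = (\<lambda>(u,v). sqrt ((real (n_closer V E u v) + real (n_closer V E v u) - 2)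
            / (real (n_closer V E u v) * real (n_closer V E v u))))"
  have GS: "GG V E = sum g S / 2" by (simp add: GG_def S_def g_def)
  have "g x = sqrt (real (card V) - 2) * f x" if "x \<in> S" for x
  proof -
    obtain u v where x: "x = (u,v)" by force
    hence "E u v" using that by (simp add: S_E)
    from closer_sum[OF this] have "real (n_closer V E u v) + real (n_closer V E v u) = real (card V)"
      by (metis of_nat_add)
    then show ?thesis by (simp add: x g_def f_def real_sqrt_divide)
  qed
  then have "sum g S = sqrt (real (card V) - 2) * sum f S"
    by (simp add: sum_distrib_left)
  then show ?thesis by (simp add: GS NGG_S)
qed

lemma sq_bound:
  assumes "(u,v) \<in> S"
  shows "(f (u,v))^2 \<le> (1/real (card (N u)) + 1/real (card (N v))) / real (card V)"
proof -
  have e: "E u v" using assms S_E by simp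
  define a where "a = real (n_closer V E u v)"
  define b where "b = real (n_closer V E v u)"
  define du where "du = real (card (N u))"
  define dv where "dv = real (card (N v))"
  have h: "1 \<le> du" "du \<le> a" "1 \<le> dv" "dv \<le> b" "a + b = real (card V)"
    using deg_pos[OF e] deg_pos[OF Esym[OF e]] closer_deg[OF e] closer_deg[OF Esym[OF e]] closer_sum[OF e]
    by (auto simp: a_def b_def du_def dv_def simp flip: of_nat_add)
  have "(f (u,v))^2 = 1/(a*b)" using h by (simp add: f_def a_def b_def power_divide)
  also have "\<dots> = (1/a + 1/b)/(a+b)" using h by (simp add: field_simps)
  also have "\<dots> \<le> (1/du + 1/dv)/(a+b)" using h
    by (intro divide_right_mono add_mono) (auto simp: frac_le)
  finally show ?thesis using h by (simp add: du_def dv_def)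
qed

lemma S_Sigma: "S = Sigma V N" using EV by (auto simp: S_def N_def)

lemma sum_deg: "(\<Sum>(u,v)\<in>S. 1/real (card (N u))) \<le> real (card V)"
proof -
  have "(\<Sum>(u,v)\<in>S. 1/real (card (N u))) = (\<Sum>u\<in>V. \<Sum>v\<in>N u. 1/real (card (N u)))"
    unfolding S_Sigma by (rule sum.Sigma[symmetric]) (auto simp: finV finN)
  also have "\<dots> = (\<Sum>u\<in>V. real (card (N u)) * (1/real (card (N u))))" by simp
  also have "\<dots> \<le> (\<Sum>u\<in>V. 1)" by (rule sum_mono) auto
  finally show ?thesis by simp
qed

lemma sum_swap: "(\<Sum>(u,v)\<in>S. 1/real (card (N v))) = (\<Sum>(u,v)\<in>S. 1/real (card (N u)))"
  by (rule sum.reindex_bij_witness[where i=prod.swap and j=prod.swap]) (auto simp: S_def Esym)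

lemma Vne: "card V > 0" using conn finV by (auto simp: connected_graph_def card_gt_0_iff)

lemma NGG_bound: "2 * NGG V E \<le> sqrt (2 * real (card S))"
proof -
  have "(\<Sum>x\<in>S. (f x)^2) \<le> (\<Sum>(u,v)\<in>S. (1/real (card (N u)) + 1/real (card (N v))) / real (card V))"
    by (rule sum_mono) (use sq_bound in auto)
  also have "\<dots> = ((\<Sum>(u,v)\<in>S. 1/real (card (N u))) + (\<Sum>(u,v)\<in>S. 1/real (card (N v)))) / real (card V)"
    by (simp add: sum_divide_distrib[symmetric] sum.distrib[symmetric] case_prod_unfold)
  also have "\<dots> \<le> 2"
    using sum_deg sum_swap Vne by (simp add: divide_simps)
  finally have s2: "(\<Sum>x\<in>S. (f x)^2) \<le> 2" .
  have "(sum f S)^2 \<le> (\<Sum>x\<in>S. (f x)^2) * real (card S)" by (rule sum_squared_le_sum_of_squares)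
  also have "\<dots> \<le> 2 * real (card S)" using s2 by (intro mult_right_mono) auto
  finally have "sum f S \<le> sqrt (2 * real (card S))" by (rule real_le_rsqrt)
  then show ?thesis by (simp add: NGG_S)
qed

end

context bg begin

abbreviation "p \<equiv> card V div 2"
abbreviation "q \<equiv> card V - card V div 2"

lemma complete_of_edges:
  assumes "2*(p*q) \<le> card S"
  shows "is_complete_bipartite V E p q"
proof -
  define X where "X = V \<inter> A"
  define Y where "Y = V - A"
  define T where "T = X \<times> Y \<union> Y \<times> X"
  have fX: "finite X" "finite Y" using finV by (auto simp: X_def Y_def)
  have XY: "X \<inter> Y = {}" "X \<union> Y = V" by (auto simp: X_def Y_def)
  have cY: "card Y = card V - card X"
    using XY fX by (metis card_Un_disjoint add_diff_cancel_left')
  have kV: "card X \<le> card V" using finV by (simp add: X_def card_mono)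
  have cT: "card T = 2 * (card X * (card V - card X))"
    unfolding T_def using fX XY cY
    by (subst card_Un_disjoint) (auto simp: card_cartesian_product)
  have ST: "S \<subseteq> T" using bipA by (auto simp: S_def T_def X_def Y_def)
  have fT: "finite T" using fX by (simp add: T_def)
  have "card S \<le> card T" by (rule card_mono[OF fT ST])
  with kq[OF kV] assms cT have eq: "card S = card T" "card X * (card V - card X) = p*q" by linarith+
  then have ST': "S = T" using card_subset_eq[OF fT ST] by simp
  have k: "card X = p \<or> card X = q" using kq[OF kV] eq(2) by blast
  have EE: "E x y \<longleftrightarrow> (x \<in> X \<and> y \<in> Y) \<or> (x \<in> Y \<and> y \<in> X)" for x y
    using ST' S_E[of x y] by (auto simp: T_def)
  show ?thesis
  proof (cases "card X = p")
    case True
    then show ?thesis unfolding is_complete_bipartite_def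
      using XY cY EE by (intro exI[of _ X] exI[of _ Y]) auto
  next
    case False
    then have "card X = q" using k by simp
    then show ?thesis unfolding is_complete_bipartite_def
      using XY cY EE kV by (intro exI[of _ Y] exI[of _ X]) auto
  qed
qed

lemma complete_NGG:
  assumes "is_complete_bipartite V E a b"
  shows "NGG V E = sqrt (real a * real b) \<and> card S = 2*(a*b)"
proof -
  obtain X Y where XY: "X \<inter> Y = {}" "X \<union> Y = V" "card X = a" "card Y = b"
    and EE: "\<And>x y. E x y \<longleftrightarrow> (x \<in> X \<and> y \<in> Y) \<or> (x \<in> Y \<and> y \<in> X)"
    using assms unfolding is_complete_bipartite_def by blast
  have fX: "finite X" "finite Y" using finV XY by (auto intro: finite_subset)
  have cV: "card V = a + b" using XY fX by (metis card_Un_disjoint)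
  have NX: "N u = Y" if "u \<in> X" for u using that XY(1) EE by (auto simp: N_def)
  have NY: "N u = X" if "u \<in> Y" for u using that XY(1) EE by (auto simp: N_def)
  have prod: "f x = 1 / sqrt (real a * real b)" if "x \<in> S" for x
  proof -
    obtain u v where x: "x = (u,v)" by force
    have e: "E u v" using that x S_E by simp
    have s: "n_closer V E u v + n_closer V E v u = a + b" using closer_sum[OF e] cV by simp
    have d1: "card (N u) \<le> n_closer V E u v" and d2: "card (N v) \<le> n_closer V E v u"
      using closer_deg[OF e] closer_deg[OF Esym[OF e]] by auto
    show ?thesis
    proof (cases "u \<in> X")
      case True
      then have "v \<in> Y" using e EE XY(1) by blast
      then have "n_closer V E u v = b" "n_closer V E v u = a"
        using d1 d2 s NX[OF True] NY XY by auto
      then show ?thesis by (simp add: x f_def mult.commute)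
    next
      case False
      then have "u \<in> Y" "v \<in> X" using e EE by auto
      then have "n_closer V E u v = a" "n_closer V E v u = b"
        using d1 d2 s NY NX XY by auto
      then show ?thesis by (simp add: x f_def)
    qed
  qed
  have ST: "S = X \<times> Y \<union> Y \<times> X" using EE S_E by auto
  have cS: "card S = 2*(a*b)" unfolding ST using fX XY
    by (subst card_Un_disjoint) (auto simp: card_cartesian_product)
  have "sum f S = real (card S) * (1 / sqrt (real a * real b))" using prod by simp
  then have "NGG V E = real (a*b) / sqrt (real a * real b)" using cS by (simp add: NGG_S)
  also have "\<dots> = sqrt (real a * real b)" by (simp add: real_div_sqrt)
  finally show ?thesis using cS by simp
qed

lemma edge_exists:
  assumes "card V \<ge> 2" shows "card S \<ge> 2"
proof -
  obtain x y where xy: "x \<in> V" "y \<in> V" "x \<noteq> y"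
    using assms by (metis card_2_iff' card_le_Suc_iff numeral_2_eq_2 insert_iff)
  obtain xs where xs: "is_walk V E xs" "hd xs = x" "last xs = y"
    using conn xy unfolding connected_graph_def by blast
  have "length xs \<noteq> 1" using xs xy by (cases xs) auto
  moreover have "xs \<noteq> []" using xs by (simp add: is_walk_def)
  ultimately have "Suc 0 < length xs" by (cases xs) auto
  then have e: "E (xs!0) (xs!1)" using xs by (simp add: is_walk_def)
  have "{(xs!0, xs!1), (xs!1, xs!0)} \<subseteq> S" using e Esym S_E by auto
  moreover have "xs!0 \<noteq> xs!1" using e Eirr by metis
  then have "card {(xs!0, xs!1), (xs!1, xs!0)} = 2" by simp
  ultimately show ?thesis using card_mono[OF finS] by metis
qed

lemma main:
  assumes "card V \<ge> 2"
  shows "NGG V E \<le> sqrt (real p * real q) \<and>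
         GG V E \<le> sqrt ((real (card V) - 2) * real p * real q) \<and>
         (NGG V E = sqrt (real p * real q) \<longleftrightarrow> is_complete_bipartite V E p q) \<and>
         (GG V E = sqrt ((real (card V) - 2) * real p * real q) \<longleftrightarrow> is_complete_bipartite V E p q)"
proof -
  have pq: "card S \<le> 2*(p*q)"
  proof -
    define X where "X = V \<inter> A"
    define Y where "Y = V - A"
    have fX: "finite X" "finite Y" using finV by (auto simp: X_def Y_def)
    have XY: "X \<inter> Y = {}" "X \<union> Y = V" by (auto simp: X_def Y_def)
    have cY: "card Y = card V - card X"
      using XY fX by (metis card_Un_disjoint add_diff_cancel_left')
    have kV: "card X \<le> card V" using finV by (simp add: X_def card_mono)
    have ST: "S \<subseteq> X \<times> Y \<union> Y \<times> X" using bipA by (auto simp: S_def X_def Y_def)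
    have "card S \<le> card (X \<times> Y \<union> Y \<times> X)" using ST fX by (intro card_mono) auto
    also have "\<dots> \<le> card (X \<times> Y) + card (Y \<times> X)" by (rule card_Un_le)
    also have "\<dots> = 2 * (card X * (card V - card X))" using cY by (simp add: card_cartesian_product)
    also have "\<dots> \<le> 2*(p*q)" using kq[OF kV] by simp
    finally show ?thesis .
  qed
  have sq: "sqrt (real p * real q) = sqrt (2 * real (2*(p*q))) / 2"
  proof -
    have "sqrt (2 * real (2*(p*q))) = sqrt (2^2 * (real p * real q))" by simp
    also have "\<dots> = 2 * sqrt (real p * real q)" by (simp only: real_sqrt_mult) simp
    finally show ?thesis by simp
  qed
  have b1: "NGG V E \<le> sqrt (real p * real q)"
  proof -
    have "real (card S) \<le> real (2*(p*q))" using pq by (simp only: of_nat_le_iff)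
    then have "sqrt (2 * real (card S)) \<le> sqrt (2 * real (2*(p*q)))"
      by (intro real_sqrt_le_mono) linarith
    then show ?thesis using NGG_bound sq by linarith
  qed
  have eqc: "NGG V E = sqrt (real p * real q) \<longleftrightarrow> is_complete_bipartite V E p q"
  proof
    assume h: "NGG V E = sqrt (real p * real q)"
    have "sqrt (2 * real (2*(p*q))) \<le> sqrt (2 * real (card S))" using NGG_bound sq h by linarith
    then have "real (2*(p*q)) \<le> real (card S)" by (simp only: real_sqrt_le_iff)
    then have "2*(p*q) \<le> card S" by (simp only: of_nat_le_iff)
    then show "is_complete_bipartite V E p q" by (rule complete_of_edges)
  next
    assume "is_complete_bipartite V E p q"
    then show "NGG V E = sqrt (real p * real q)" using complete_NGG by blast
  qed
  have g: "GG V E = sqrt (real (card V) - 2) * NGG V E" by (rule GG_NGG)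
  have r: "sqrt ((real (card V) - 2) * real p * real q) = sqrt (real (card V) - 2) * sqrt (real p * real q)"
    by (simp add: real_sqrt_mult mult.assoc)
  have nn: "sqrt (real (card V) - 2) \<ge> 0" using assms by simp
  have b2: "GG V E \<le> sqrt ((real (card V) - 2) * real p * real q)"
    using g r b1 nn by (simp add: mult_left_mono)
  have eqg: "GG V E = sqrt ((real (card V) - 2) * real p * real q) \<longleftrightarrow> is_complete_bipartite V E p q"
  proof (cases "card V = 2")
    case True
    have "card S \<ge> 2*(p*q)" using edge_exists assms True by simp
    then have "is_complete_bipartite V E p q" by (rule complete_of_edges)
    moreover have "GG V E = sqrt ((real (card V) - 2) * real p * real q)" using g True by simp
    ultimately show ?thesis by simp
  next
    case False
    then have pos: "sqrt (real (card V) - 2) > 0" using assms by simp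
    show ?thesis using eqc g r pos by auto
  qed
  show ?thesis using b1 b2 eqc eqg by blast
qed

end

theorem corollary6:
  fixes n :: nat
  assumes "n \<ge> 2"
  shows "(\<forall>(V :: 'a set) E. simple_graph V E \<and> connected_graph V E \<and> bipartite V E \<and> card V = n \<longrightarrow>
            NGG V E \<le> sqrt (real (n div 2) * real (n - n div 2)) \<and>
            GG V E \<le> sqrt ((real n - 2) * real (n div 2) * real (n - n div 2)) \<and>
            (NGG V E = sqrt (real (n div 2) * real (n - n div 2)) \<longleftrightarrow>
               is_complete_bipartite V E (n div 2) (n - n div 2)) \<and>
            (GG V E = sqrt ((real n - 2) * real (n div 2) * real (n - n div 2)) \<longleftrightarrow>
               is_complete_bipartite V E (n div 2) (n - n div 2)))
       \<and> (\<exists>(V :: nat set) E. simple_graph V E \<and> connected_graph V E \<and> bipartite V E \<and> card V = n \<and>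
            NGG V E = sqrt (real (n div 2) * real (n - n div 2)) \<and>
            GG V E = sqrt ((real n - 2) * real (n div 2) * real (n - n div 2)))"
proof
  show "\<forall>(V :: 'a set) E. simple_graph V E \<and> connected_graph V E \<and> bipartite V E \<and> card V = n \<longrightarrow>
            NGG V E \<le> sqrt (real (n div 2) * real (n - n div 2)) \<and>
            GG V E \<le> sqrt ((real n - 2) * real (n div 2) * real (n - n div 2)) \<and>
            (NGG V E = sqrt (real (n div 2) * real (n - n div 2)) \<longleftrightarrow>
               is_complete_bipartite V E (n div 2) (n - n div 2)) \<and>
            (GG V E = sqrt ((real n - 2) * real (n div 2) * real (n - n div 2)) \<longleftrightarrow>
               is_complete_bipartite V E (n div 2) (n - n div 2))"
  proof (intro allI impI)
    fix V :: "'a set" and E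
    assume h: "simple_graph V E \<and> connected_graph V E \<and> bipartite V E \<and> card V = n"
    then obtain A where A: "\<forall>x y. E x y \<longrightarrow> (x \<in> A \<longleftrightarrow> y \<notin> A)" by (auto simp: bipartite_def)
    interpret bg V E A using h A by unfold_locales auto
    show "NGG V E \<le> sqrt (real (n div 2) * real (n - n div 2)) \<and>
            GG V E \<le> sqrt ((real n - 2) * real (n div 2) * real (n - n div 2)) \<and>
            (NGG V E = sqrt (real (n div 2) * real (n - n div 2)) \<longleftrightarrow>
               is_complete_bipartite V E (n div 2) (n - n div 2)) \<and>
            (GG V E = sqrt ((real n - 2) * real (n div 2) * real (n - n div 2)) \<longleftrightarrow>
               is_complete_bipartite V E (n div 2) (n - n div 2))"
      using main h assms by auto
  qed
next
  define V :: "nat set" where "V = {0..<n}"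
  define A0 :: "nat set" where "A0 = {0..<n div 2}"
  define E where "E = (\<lambda>x y. (x \<in> A0 \<and> y \<in> V - A0) \<or> (x \<in> V - A0 \<and> y \<in> A0))"
  have AV: "A0 \<subseteq> V" by (auto simp: A0_def V_def)
  have sg: "simple_graph V E" using AV by (auto simp: simple_graph_def E_def V_def)
  have bipA: "\<And>x y. E x y \<Longrightarrow> (x \<in> A0 \<longleftrightarrow> y \<notin> A0)" by (auto simp: E_def)
  have p0: "0 \<in> A0" "0 \<in> V" using assms by (auto simp: A0_def V_def)
  have q0: "n div 2 \<in> V - A0" using assms by (auto simp: A0_def V_def)
  have conn: "connected_graph V E"
    unfolding connected_graph_def
  proof (intro conjI ballI)
    show "V \<noteq> {}" using p0 by auto
  next
    fix u v assume uv: "u \<in> V" "v \<in> V"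
    show "\<exists>xs. is_walk V E xs \<and> hd xs = u \<and> last xs = v"
    proof (cases "u = v")
      case True then show ?thesis using walk1[OF uv(1)] by (intro exI[of _ "[u]"]) auto
    next
      case False
      show ?thesis
      proof (cases "E u v")
        case True then show ?thesis using walk2[of u V v E, OF uv True] by (intro exI[of _ "[u,v]"]) auto
      next
        case nE: False
        show ?thesis
        proof (cases "u \<in> A0")
          case True
          then have "E u (n div 2)" "E (n div 2) v" using nE q0 uv by (auto simp: E_def)
          then show ?thesis using walk3[OF uv(1) _ uv(2)] q0 by (intro exI[of _ "[u, n div 2, v]"]) auto
        next
          case False
          then have "E u 0" "E 0 v" using nE p0 uv by (auto simp: E_def)
          then show ?thesis using walk3[OF uv(1) _ uv(2)] p0 by (intro exI[of _ "[u, 0, v]"]) auto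
        qed
      qed
    qed
  qed
  interpret bg V E A0 using sg conn bipA by unfold_locales auto
  have cV: "card V = n" by (simp add: V_def)
  have cb: "is_complete_bipartite V E (n div 2) (n - n div 2)"
    unfolding is_complete_bipartite_def
    by (intro exI[of _ A0] exI[of _ "V - A0"]) (use AV in \<open>auto simp: E_def A0_def V_def\<close>)
  have "NGG V E = sqrt (real (n div 2) * real (n - n div 2))"
    using complete_NGG[OF cb] by simp
  moreover have "GG V E = sqrt ((real n - 2) * real (n div 2) * real (n - n div 2))"
    using GG_NGG calculation cV by (simp add: real_sqrt_mult mult.assoc)
  moreover have "bipartite V E" using bipA by (auto simp: bipartite_def)
  ultimately show "\<exists>(V :: nat set) E. simple_graph V E \<and> connected_graph V E \<and> bipartite V E \<and> card V = n \<and>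
            NGG V E = sqrt (real (n div 2) * real (n - n div 2)) \<and>
            GG V E = sqrt ((real n - 2) * real (n div 2) * real (n - n div 2))"
    using sg conn cV by blast
qed

end
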